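(* Let $\hat\tau^{\mathrm{ols}}$ be the ordinary least squares coefficient of $Z_{ij}$ obtained by fitting the one-stage meta-analysis model $Y_{ij}=\phi+\tau Z_{ij}+\sum_{l\in F}\{\beta_{i,l}X_{ij,l}+\gamma_{i,l}X_{ij,l}Z_{ij}\}+\sum_{l\in C}\{\beta_l X_{ij,l}+\gamma_l X_{ij,l}Z_{ij}\}+\epsilon_{ij}$, i.e. the OLS regression of $Y_{ij}$ on an intercept, $Z_{ij}$, the regressors $1\{i=i'\}X_{ij,l}$ ($l\in F$, $i'=1,\dots,m$), the regressors $X_{ij,l}$ ($l\in C$), and all of these regressors multiplied by $Z_{ij}$. For $z\in\{0,1\}$ let $(\hat w^{\mathrm{ols}}_{z,ij})_{ij:Z_{ij}=z}$ be the solution of minimize $\sum_{i=1}^m\sum_{j:Z_{ij}=z}w_{ij}^2$ subject to $\sum_{i=1}^m\sum_{j:Z_{ij}=z}w_{ij}X_{ij,l}=0$ for all $l\in C$; $\sum_{j:Z_{ij}=z}w_{ij}X_{ij,l}=0$ for all $l\in F$ and all $i=1,\dots,m$; and $\sum_{i=1}^m\sum_{j:Z_{ij}=z}w_{ij}=1$. Then $\hat\tau^{\mathrm{ols}}=\sum_{i=1}^m\sum_{j:Z_{ij}=1}\hat w^{\mathrm{ols}}_{1,ij}Y_{ij}-\sum_{i=1}^m\sum_{j:Z_{ij}=0}\hat w^{\mathrm{ols}}_{0,ij}Y_{ij}$.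
   Context: Individual-level data from $m$ studies: study $i$ has $n_i$ individuals; individual $ij$ has binary treatment $Z_{ij}$, covariate vector $X_{ij}=(X_{ij,1},\dots,X_{ij,p})^\top\in\mathbb{R}^p$ and outcome $Y_{ij}$. The covariate indices are split into a set $F$ (covariates with study-specific, "fixed", coefficients) and a set $C$ (covariates with coefficients common to all studies), with $F\cup C=\{1,\dots,p\}$. The intercept $\phi$ and treatment effect $\tau$ are common to all studies. The OLS fit is assumed to be well defined (design matrix of full column rank). *)

theory Defs
  imports Complex_Main
begin

text \<open>Z i j is the (binary) treatment, X i j l the l-th
  covariate of individual ij, Y i j the outcome.\<close>

definition obs :: "nat \<Rightarrow> (nat \<Rightarrow> nat) \<Rightarrow> (nat \<times> nat) set" where
  "obs m n = {(i, j). i \<in> {1..m} \<and> j \<in> {1..n i}}"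

datatype reg = Icpt | Trt | XF nat nat | XC nat | XFZ nat nat | XCZ nat

definition regs :: "nat \<Rightarrow> nat set \<Rightarrow> nat set \<Rightarrow> reg set" where
  "regs m F C = {Icpt, Trt}
     \<union> {XF l i' | l i'. l \<in> F \<and> i' \<in> {1..m}} \<union> {XC l | l. l \<in> C}
     \<union> {XFZ l i' | l i'. l \<in> F \<and> i' \<in> {1..m}} \<union> {XCZ l | l. l \<in> C}"

definition zval :: "(nat \<Rightarrow> nat \<Rightarrow> bool) \<Rightarrow> nat \<Rightarrow> nat \<Rightarrow> real" where
  "zval Z i j = (if Z i j then 1 else 0)"

fun regval :: "(nat \<Rightarrow> nat \<Rightarrow> bool) \<Rightarrow> (nat \<Rightarrow> nat \<Rightarrow> nat \<Rightarrow> real) \<Rightarrow> reg \<Rightarrow> nat \<Rightarrow> nat \<Rightarrow> real" where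
  "regval Z X Icpt i j = 1"
| "regval Z X Trt i j = zval Z i j"
| "regval Z X (XF l i') i j = (if i = i' then X i j l else 0)"
| "regval Z X (XC l) i j = X i j l"
| "regval Z X (XFZ l i') i j = (if i = i' then X i j l else 0) * zval Z i j"
| "regval Z X (XCZ l) i j = X i j l * zval Z i j"

definition fitted :: "nat \<Rightarrow> nat set \<Rightarrow> nat set \<Rightarrow> (nat \<Rightarrow> nat \<Rightarrow> bool) \<Rightarrow> (nat \<Rightarrow> nat \<Rightarrow> nat \<Rightarrow> real)
    \<Rightarrow> (reg \<Rightarrow> real) \<Rightarrow> nat \<Rightarrow> nat \<Rightarrow> real" where
  "fitted m F C Z X b i j = (\<Sum>r\<in>regs m F C. b r * regval Z X r i j)"

definition rss :: "nat \<Rightarrow> (nat \<Rightarrow> nat) \<Rightarrow> nat set \<Rightarrow> nat set \<Rightarrow> (nat \<Rightarrow> nat \<Rightarrow> bool)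
    \<Rightarrow> (nat \<Rightarrow> nat \<Rightarrow> nat \<Rightarrow> real) \<Rightarrow> (nat \<Rightarrow> nat \<Rightarrow> real) \<Rightarrow> (reg \<Rightarrow> real) \<Rightarrow> real" where
  "rss m n F C Z X Y b = (\<Sum>(i, j)\<in>obs m n. (Y i j - fitted m F C Z X b i j)\<^sup>2)"

definition is_ols :: "nat \<Rightarrow> (nat \<Rightarrow> nat) \<Rightarrow> nat set \<Rightarrow> nat set \<Rightarrow> (nat \<Rightarrow> nat \<Rightarrow> bool)
    \<Rightarrow> (nat \<Rightarrow> nat \<Rightarrow> nat \<Rightarrow> real) \<Rightarrow> (nat \<Rightarrow> nat \<Rightarrow> real) \<Rightarrow> (reg \<Rightarrow> real) \<Rightarrow> bool" where
  "is_ols m n F C Z X Y b \<longleftrightarrow> (\<forall>b'. rss m n F C Z X Y b \<le> rss m n F C Z X Y b')"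

definition full_rank :: "nat \<Rightarrow> (nat \<Rightarrow> nat) \<Rightarrow> nat set \<Rightarrow> nat set \<Rightarrow> (nat \<Rightarrow> nat \<Rightarrow> bool)
    \<Rightarrow> (nat \<Rightarrow> nat \<Rightarrow> nat \<Rightarrow> real) \<Rightarrow> bool" where
  "full_rank m n F C Z X \<longleftrightarrow>
     (\<forall>c. (\<forall>(i, j)\<in>obs m n. (\<Sum>r\<in>regs m F C. c r * regval Z X r i j) = 0)
          \<longrightarrow> (\<forall>r\<in>regs m F C. c r = 0))"

definition w_feasible :: "nat \<Rightarrow> (nat \<Rightarrow> nat) \<Rightarrow> nat set \<Rightarrow> nat set \<Rightarrow> (nat \<Rightarrow> nat \<Rightarrow> bool)
    \<Rightarrow> (nat \<Rightarrow> nat \<Rightarrow> nat \<Rightarrow> real) \<Rightarrow> bool \<Rightarrow> (nat \<Rightarrow> nat \<Rightarrow> real) \<Rightarrow> bool" where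
  "w_feasible m n F C Z X z w \<longleftrightarrow>
     (\<forall>l\<in>C. (\<Sum>(i, j)\<in>{(i, j)\<in>obs m n. Z i j = z}. w i j * X i j l) = 0)
   \<and> (\<forall>l\<in>F. \<forall>i\<in>{1..m}. (\<Sum>j\<in>{j\<in>{1..n i}. Z i j = z}. w i j * X i j l) = 0)
   \<and> (\<Sum>(i, j)\<in>{(i, j)\<in>obs m n. Z i j = z}. w i j) = 1"

definition w_objective :: "nat \<Rightarrow> (nat \<Rightarrow> nat) \<Rightarrow> (nat \<Rightarrow> nat \<Rightarrow> bool) \<Rightarrow> bool
    \<Rightarrow> (nat \<Rightarrow> nat \<Rightarrow> real) \<Rightarrow> real" where
  "w_objective m n Z z w = (\<Sum>(i, j)\<in>{(i, j)\<in>obs m n. Z i j = z}. (w i j)\<^sup>2)"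

definition w_optimal :: "nat \<Rightarrow> (nat \<Rightarrow> nat) \<Rightarrow> nat set \<Rightarrow> nat set \<Rightarrow> (nat \<Rightarrow> nat \<Rightarrow> bool)
    \<Rightarrow> (nat \<Rightarrow> nat \<Rightarrow> nat \<Rightarrow> real) \<Rightarrow> bool \<Rightarrow> (nat \<Rightarrow> nat \<Rightarrow> real) \<Rightarrow> bool" where
  "w_optimal m n F C Z X z w \<longleftrightarrow> w_feasible m n F C Z X z w \<and>
     (\<forall>w'. w_feasible m n F C Z X z w' \<longrightarrow> w_objective m n Z z w \<le> w_objective m n Z z w')"

end

theory Submission
  imports Defs
begin

lemma obs_Sigma: "obs m n = Sigma {1..m} (\<lambda>i. {1..n i})"
  unfolding obs_def by auto

lemma finite_obs[simp]: "finite (obs m n)"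
  unfolding obs_Sigma by auto

lemma finite_obsP[simp]: "finite {(i, j)\<in>obs m n. P i j}"
  by (rule finite_subset[OF _ finite_obs]) auto

lemma sum_obsP:
  "(\<Sum>(i, j)\<in>{(i, j)\<in>obs m n. P i j}. f i j) = (\<Sum>i\<in>{1..m}. \<Sum>j\<in>{1..n i}. if P i j then f i j else 0)"
proof -
  have "{(i, j)\<in>obs m n. P i j} = Sigma {1..m} (\<lambda>i. {j\<in>{1..n i}. P i j})"
    unfolding obs_def by auto
  hence "(\<Sum>(i, j)\<in>{(i, j)\<in>obs m n. P i j}. f i j) = (\<Sum>i\<in>{1..m}. \<Sum>j\<in>{j\<in>{1..n i}. P i j}. f i j)"
    by (simp add: sum.Sigma)
  also have "\<dots> = (\<Sum>i\<in>{1..m}. \<Sum>j\<in>{1..n i}. if P i j then f i j else 0)"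
    by (rule sum.cong[OF refl], rule sum.inter_filter) simp
  finally show ?thesis .
qed

lemma sum_obs:
  "(\<Sum>(i, j)\<in>obs m n. f i j) = (\<Sum>i\<in>{1..m}. \<Sum>j\<in>{1..n i}. f i j)"
  unfolding obs_Sigma by (simp add: sum.Sigma)

lemma sum_row:
  fixes f g :: "nat \<Rightarrow> nat \<Rightarrow> real"
  assumes "i \<in> {1..m}"
  shows "(\<Sum>(i', j)\<in>{(i', j)\<in>obs m n. P i' j}. f i' j * (if i' = i then g i' j else 0))
     = (\<Sum>j\<in>{j\<in>{1..n i}. P i j}. f i j * g i j)"
proof -
  have "(\<Sum>(i', j)\<in>{(i', j)\<in>obs m n. P i' j}. f i' j * (if i' = i then g i' j else 0))
     = (\<Sum>i'\<in>{1..m}. if i' = i then (\<Sum>j\<in>{1..n i}. if P i j then f i j * g i j else 0) else 0)"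
    unfolding sum_obsP by (rule sum.cong[OF refl]) (auto intro!: sum.cong sum.neutral)
  also have "\<dots> = (\<Sum>j\<in>{1..n i}. if P i j then f i j * g i j else 0)"
    using assms by simp
  also have "\<dots> = (\<Sum>j\<in>{j\<in>{1..n i}. P i j}. f i j * g i j)"
    by (rule sum.inter_filter[symmetric]) simp
  finally show ?thesis .
qed

lemma finite_regs:
  assumes "F \<union> C = {1..p}"
  shows "finite (regs m F C)"
proof -
  have fF: "finite F" and fC: "finite C" using assms
    by (metis finite_Un finite_atLeastAtMost)+
  show ?thesis unfolding regs_def
    using fF fC by (auto intro!: finite_image_set2 finite_image_set)
qed
lemma fo_quad:
  fixes u v :: "'a \<Rightarrow> real"
  assumes "finite S" "\<And>t. (\<Sum>x\<in>S. (u x)^2) \<le> (\<Sum>x\<in>S. (u x + t * v x)^2)"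
  shows "(\<Sum>x\<in>S. u x * v x) = 0"
proof -
  define A where "A = (\<Sum>x\<in>S. u x * v x)"
  define B where "B = (\<Sum>x\<in>S. (v x)^2)"
  have ex: "(\<Sum>x\<in>S. (u x + t * v x)^2) = (\<Sum>x\<in>S. (u x)^2) + 2*t*A + t^2 * B" for t
    by (simp add: A_def B_def power2_eq_square algebra_simps sum.distrib sum_distrib_left)
  have B0: "B \<ge> 0" unfolding B_def by (simp add: sum_nonneg)
  have h: "0 \<le> 2*t*A + t^2*B" for t using assms(2)[of t] ex[of t] by linarith
  define t where "t = -A/(B+1)"
  have Bp: "B + 1 \<noteq> 0" "B + 1 > 0" using B0 by auto
  have eq: "(2*t*A + t^2*B) * (B+1)^2 = -(A^2*(B+2))"
  proof -
    have tb: "t * (B+1) = -A" unfolding t_def using Bp by simp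
    have "(2*t*A + t^2*B) * (B+1)^2 = 2*A*(t*(B+1))*(B+1) + B*(t*(B+1))^2"
      by (simp add: algebra_simps power2_eq_square)
    also have "\<dots> = -(A^2*(B+2))" unfolding tb by (simp add: algebra_simps power2_eq_square)
    finally show ?thesis .
  qed
  have "0 \<le> (2*t*A + t^2*B) * (B+1)^2" using h[of t] by simp
  hence "A^2 * (B+2) \<le> 0" using eq by linarith
  hence "A^2 \<le> 0" using B0
    by (simp add: mult_le_0_iff)
  thus ?thesis unfolding A_def by simp
qed

lemma ols_foc:
  assumes fr: "finite (regs m F C)" and ols: "is_ols m n F C Z X Y b" and r: "r \<in> regs m F C"
  shows "(\<Sum>(i, j)\<in>obs m n. (Y i j - fitted m F C Z X b i j) * regval Z X r i j) = 0"
proof -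
  have fit: "fitted m F C Z X (b(r := b r - t)) i j = fitted m F C Z X b i j - t * regval Z X r i j" for t i j
  proof -
    have "(\<Sum>s\<in>regs m F C - {r}. (b(r := b r - t)) s * regval Z X s i j)
        = (\<Sum>s\<in>regs m F C - {r}. b s * regval Z X s i j)"
      by (rule sum.cong) auto
    thus ?thesis unfolding fitted_def
      by (simp add: sum.remove[OF fr r] algebra_simps)
  qed
  have "(\<Sum>x\<in>obs m n. (Y (fst x) (snd x) - fitted m F C Z X b (fst x) (snd x)) * regval Z X r (fst x) (snd x)) = 0"
  proof (rule fo_quad)
    fix t
    have "rss m n F C Z X Y b \<le> rss m n F C Z X Y (b(r := b r - t))"
      using ols unfolding is_ols_def by blast
    thus "(\<Sum>x\<in>obs m n. (Y (fst x) (snd x) - fitted m F C Z X b (fst x) (snd x))\<^sup>2)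
      \<le> (\<Sum>x\<in>obs m n. (Y (fst x) (snd x) - fitted m F C Z X b (fst x) (snd x)
           + t * regval Z X r (fst x) (snd x))\<^sup>2)"
      unfolding rss_def fit by (simp add: split_def algebra_simps)
  qed simp
  thus ?thesis by (simp add: split_def)
qed

lemma w_foc:
  fixes e w :: "nat \<Rightarrow> nat \<Rightarrow> real"
  assumes opt: "w_optimal m n F C Z X z w"
   and h1: "(\<Sum>(i, j)\<in>{(i, j)\<in>obs m n. Z i j = z}. e i j) = 0"
   and h2: "\<forall>l\<in>C. (\<Sum>(i, j)\<in>{(i, j)\<in>obs m n. Z i j = z}. e i j * X i j l) = 0"
   and h3: "\<forall>l\<in>F. \<forall>i\<in>{1..m}. (\<Sum>j\<in>{j\<in>{1..n i}. Z i j = z}. e i j * X i j l) = 0"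
  shows "(\<Sum>(i, j)\<in>{(i, j)\<in>obs m n. Z i j = z}. w i j * e i j) = 0"
proof -
  have feas: "w_feasible m n F C Z X z w" and
    mn: "\<And>w'. w_feasible m n F C Z X z w' \<Longrightarrow> w_objective m n Z z w \<le> w_objective m n Z z w'"
    using opt unfolding w_optimal_def by auto
  have "(\<Sum>x\<in>{(i, j)\<in>obs m n. Z i j = z}. w (fst x) (snd x) * e (fst x) (snd x)) = 0"
  proof (rule fo_quad)
    fix t
    let ?w = "\<lambda>i j. w i j + t * e i j"
    have "w_feasible m n F C Z X z ?w"
      using feas h1 h2 h3 unfolding w_feasible_def
      by (simp add: algebra_simps sum.distrib sum_distrib_left[symmetric] split_def)
    from mn[OF this]
    show "(\<Sum>x\<in>{(i, j)\<in>obs m n. Z i j = z}. (w (fst x) (snd x))\<^sup>2)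
         \<le> (\<Sum>x\<in>{(i, j)\<in>obs m n. Z i j = z}. (w (fst x) (snd x) + t * e (fst x) (snd x))\<^sup>2)"
      unfolding w_objective_def by (simp add: split_def)
  qed simp
  thus ?thesis by (simp add: split_def)
qed

lemma sum_arm:
  fixes g :: "nat \<Rightarrow> nat \<Rightarrow> real"
  shows "(\<Sum>(i, j)\<in>{(i, j)\<in>obs m n. Z i j = z}. g i j)
    = (if z then (\<Sum>(i, j)\<in>obs m n. g i j * zval Z i j)
       else (\<Sum>(i, j)\<in>obs m n. g i j) - (\<Sum>(i, j)\<in>obs m n. g i j * zval Z i j))"
  unfolding sum_obsP sum_obs
  by (cases z) (auto simp: zval_def sum_subtractf[symmetric] intro!: sum.cong)

lemma sum_arm_zval:
  fixes g :: "nat \<Rightarrow> nat \<Rightarrow> real"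
  shows "(\<Sum>(i, j)\<in>{(i, j)\<in>obs m n. Z i j = z}. g i j * zval Z i j)
    = (if z then 1 else 0) * (\<Sum>(i, j)\<in>{(i, j)\<in>obs m n. Z i j = z}. g i j)"
  unfolding sum_distrib_left
  by (rule sum.cong) (auto simp: zval_def)

lemma arm:
  fixes w :: "nat \<Rightarrow> nat \<Rightarrow> real"
  assumes fr: "finite (regs m F C)" and ols: "is_ols m n F C Z X Y b"
    and opt: "w_optimal m n F C Z X z w"
  shows "(\<Sum>(i, j)\<in>{(i, j)\<in>obs m n. Z i j = z}. w i j * Y i j) = b Icpt + (if z then 1 else 0) * b Trt"
proof -
  define e where "e i j = Y i j - fitted m F C Z X b i j" for i j
  define T where "T = {(i, j)\<in>obs m n. Z i j = z}"
  have E: "(\<Sum>(i, j)\<in>obs m n. e i j * regval Z X r i j) = 0" if "r \<in> regs m F C" for r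
    using ols_foc[OF fr ols that] unfolding e_def .
  have inI: "Icpt \<in> regs m F C" "Trt \<in> regs m F C" unfolding regs_def by auto
  have inC: "XC l \<in> regs m F C" "XCZ l \<in> regs m F C" if "l \<in> C" for l
    using that unfolding regs_def by auto
  have inF: "XF l i \<in> regs m F C" "XFZ l i \<in> regs m F C" if "l \<in> F" "i \<in> {1..m}" for l i
    using that unfolding regs_def by blast+
  have h1: "(\<Sum>(i, j)\<in>T. e i j) = 0"
    using E[OF inI(1)] E[OF inI(2)] unfolding T_def sum_arm by simp
  have h2: "\<forall>l\<in>C. (\<Sum>(i, j)\<in>T. e i j * X i j l) = 0"
    using E[OF inC(1)] E[OF inC(2)] unfolding T_def sum_arm by (simp add: mult.assoc)
  have h3: "\<forall>l\<in>F. \<forall>i\<in>{1..m}. (\<Sum>j\<in>{j\<in>{1..n i}. Z i j = z}. e i j * X i j l) = 0"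
  proof (intro ballI)
    fix l i assume l: "l \<in> F" and i: "i \<in> {1..m}"
    have "(\<Sum>j\<in>{j\<in>{1..n i}. Z i j = z}. e i j * X i j l)
      = (\<Sum>(i', j)\<in>T. e i' j * (if i' = i then X i' j l else 0))"
      unfolding T_def by (rule sum_row[OF i, symmetric])
    also have "\<dots> = 0"
      using E[OF inF(1)[OF l i]] E[OF inF(2)[OF l i]] unfolding T_def sum_arm by (simp add: mult.assoc)
    finally show "(\<Sum>j\<in>{j\<in>{1..n i}. Z i j = z}. e i j * X i j l) = 0" .
  qed
  have we: "(\<Sum>(i, j)\<in>T. w i j * e i j) = 0"
    using w_foc[OF opt, of e] h1 h2 h3 unfolding T_def by blast
  have feas: "w_feasible m n F C Z X z w" using opt unfolding w_optimal_def by auto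
  have f1: "(\<Sum>(i, j)\<in>T. w i j) = 1"
    and f2: "\<forall>l\<in>C. (\<Sum>(i, j)\<in>T. w i j * X i j l) = 0"
    and f3: "\<forall>l\<in>F. \<forall>i\<in>{1..m}. (\<Sum>j\<in>{j\<in>{1..n i}. Z i j = z}. w i j * X i j l) = 0"
    using feas unfolding w_feasible_def T_def by auto
  define zc :: real where "zc = (if z then 1 else 0)"
  have zv: "(\<Sum>(i, j)\<in>T. g i j * zval Z i j) = zc * (\<Sum>(i, j)\<in>T. g i j)" for g
    unfolding T_def zc_def by (rule sum_arm_zval)
  have c: "(\<Sum>(i, j)\<in>T. w i j * regval Z X r i j) = (if r = Icpt then 1 else if r = Trt then zc else 0)"
    if r: "r \<in> regs m F C" for r
  proof -
    consider "r = Icpt" | "r = Trt" | l where "r = XC l" "l \<in> C" | l where "r = XCZ l" "l \<in> C"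
      | l i where "r = XF l i" "l \<in> F" "i \<in> {1..m}" | l i where "r = XFZ l i" "l \<in> F" "i \<in> {1..m}"
      using r unfolding regs_def by blast
    then show ?thesis
    proof cases
      case 1 then show ?thesis using f1 by simp
    next
      case 2 then show ?thesis using f1 zv[of w] by simp
    next
      case (3 l) then show ?thesis using f2 by simp
    next
      case (4 l) then show ?thesis using f2 zv[of "\<lambda>i j. w i j * X i j l"] by (simp add: mult.assoc)
    next
      case (5 l i) then show ?thesis using f3 sum_row[OF 5(3), where P="\<lambda>i j. Z i j = z" and n=n and f=w and g="\<lambda>i j. X i j l"]
        unfolding T_def by simp
    next
      case (6 l i)
      have "(\<Sum>(i', j)\<in>T. w i' j * regval Z X r i' j)
          = (\<Sum>(i', j)\<in>T. (w i' j * (if i' = i then X i' j l else 0)) * zval Z i' j)"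
        using 6 by (simp add: mult.assoc)
      also have "\<dots> = zc * (\<Sum>(i', j)\<in>T. w i' j * (if i' = i then X i' j l else 0))"
        by (rule zv)
      also have "\<dots> = 0"
        using f3 6 sum_row[OF 6(3), where P="\<lambda>i j. Z i j = z" and n=n and f=w and g="\<lambda>i j. X i j l"]
        unfolding T_def by simp
      finally show ?thesis using 6 by simp
    qed
  qed
  have "(\<Sum>(i, j)\<in>T. w i j * Y i j) = (\<Sum>(i, j)\<in>T. w i j * fitted m F C Z X b i j) + (\<Sum>(i, j)\<in>T. w i j * e i j)"
    by (simp add: e_def split_def sum.distrib[symmetric] algebra_simps)
  also have "(\<Sum>(i, j)\<in>T. w i j * fitted m F C Z X b i j)
      = (\<Sum>r\<in>regs m F C. b r * (\<Sum>(i, j)\<in>T. w i j * regval Z X r i j))"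
    unfolding fitted_def
    by (simp add: split_def sum_distrib_left algebra_simps sum.swap[where A=T])
  also have "\<dots> = (\<Sum>r\<in>regs m F C. (if r = Icpt then b Icpt else 0) + (if r = Trt then zc * b Trt else 0))"
    by (rule sum.cong) (auto simp: c)
  also have "\<dots> = b Icpt + zc * b Trt"
    using inI fr by (simp add: sum.distrib)
  finally show ?thesis using we unfolding T_def zc_def by simp
qed

theorem proposition2:
  fixes m p :: nat and n :: "nat \<Rightarrow> nat" and F C :: "nat set"
    and Z :: "nat \<Rightarrow> nat \<Rightarrow> bool" and X :: "nat \<Rightarrow> nat \<Rightarrow> nat \<Rightarrow> real"
    and Y :: "nat \<Rightarrow> nat \<Rightarrow> real"
    and b :: "reg \<Rightarrow> real" and w1 w0 :: "nat \<Rightarrow> nat \<Rightarrow> real"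
  assumes split: "F \<union> C = {1..p}" "F \<inter> C = {}"
    and rank: "full_rank m n F C Z X"
    and ols: "is_ols m n F C Z X Y b"
    and opt1: "w_optimal m n F C Z X True w1"
    and opt0: "w_optimal m n F C Z X False w0"
  shows "b Trt = (\<Sum>(i, j)\<in>{(i, j)\<in>obs m n. Z i j}. w1 i j * Y i j)
               - (\<Sum>(i, j)\<in>{(i, j)\<in>obs m n. \<not> Z i j}. w0 i j * Y i j)"
proof -
  have fr: "finite (regs m F C)" by (rule finite_regs[OF split(1)])
  have a1: "(\<Sum>(i, j)\<in>{(i, j)\<in>obs m n. Z i j = True}. w1 i j * Y i j) = b Icpt + (if True then 1 else 0) * b Trt"
    by (rule arm[OF fr ols opt1])
  have a0: "(\<Sum>(i, j)\<in>{(i, j)\<in>obs m n. Z i j = False}. w0 i j * Y i j) = b Icpt + (if False then 1 else 0) * b Trt"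
    by (rule arm[OF fr ols opt0])
  show ?thesis using a1 a0 by simp
qed

end
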